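(* Let $(M,d)$ be a metric space, $\mathsf{P}\subseteq M$ a set of $n$ points, and $1\le\ell\le k\le n$ integers; put $m=\lfloor k/\ell\rfloor$. Let $Q=\{q_1,\dots,q_m\}$ be the output of Gonzalez's algorithm on $\mathsf{P}$ with $m$ centers, and let $C\subseteq\mathsf{P}$ be any set with $|C|=k$ and $C\supseteq\bigcup_{i=1}^m N_{\mathsf{P}}(q_i,\ell)$. Let $r_{\mathrm{opt}}=\min_{C'\subseteq\mathsf{P},|C'|=k}\max_{p\in\mathsf{P}} d_{C'}(p,\ell)$. Then $\max_{p\in\mathsf{P}} d_C(p,\ell)\le 4\,r_{\mathrm{opt}}$, and if moreover $\ell\mid k$ then $\max_{p\in\mathsf{P}} d_C(p,\ell)\le 3\,r_{\mathrm{opt}}$.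
   Context: Gonzalez's algorithm with $m$ centers: $q_1\in\mathsf{P}$ is arbitrary, and for $i=2,\dots,m$, $q_i$ is a point of $\mathsf{P}$ maximizing $d(p,\{q_1,\dots,q_{i-1}\})$ over $p\in\mathsf{P}$. For a finite $S\subseteq M$ and $1\le i\le|S|$, $d_S(p,i)$ is the radius of the smallest closed ball centered at $p$ containing at least $i$ points of $S$; nearest neighbors are ordered lexicographically by $(d(p,s),\text{index of }s)$ (points of $\mathsf{P}=\{p_1,\dots,p_n\}$ are indexed) and $N_S(p,i)$ is the set of the first $i$ points of $S$ in this order, $|N_S(p,i)|=i$. The quantity $\max_{p\in\mathsf{P}} d_C(p,\ell)$ is the fault-tolerant $k$-center cost of $C$. *)

theory Defs
  imports "HOL-Analysis.Analysis"
begin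

definition dist_set :: "'a::metric_space \<Rightarrow> 'a set \<Rightarrow> real" where
  "dist_set x S = Min (dist x ` S)"

definition gonzalez :: "'a::metric_space set \<Rightarrow> nat \<Rightarrow> (nat \<Rightarrow> 'a) \<Rightarrow> bool" where
  "gonzalez P m q \<longleftrightarrow>
     (\<forall>i\<in>{1..m}. q i \<in> P) \<and>
     (\<forall>i\<in>{2..m}. \<forall>p\<in>P. dist_set p (q ` {1..<i}) \<le> dist_set (q i) (q ` {1..<i}))"

definition kdist :: "'a::metric_space set \<Rightarrow> 'a \<Rightarrow> nat \<Rightarrow> real" where
  "kdist S p i = Inf {r::real. 0 \<le> r \<and> i \<le> card (S \<inter> cball p r)}"

(* N_S(p,i): first i points of S in the lexicographic order by (d(p,s), index s),
   where ix gives the index of a point *)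
definition nn_set :: "('a \<Rightarrow> nat) \<Rightarrow> 'a::metric_space set \<Rightarrow> 'a \<Rightarrow> nat \<Rightarrow> 'a set" where
  "nn_set ix S p i = {s \<in> S. card {t \<in> S. dist p t < dist p s \<or> (dist p t = dist p s \<and> ix t < ix s)} < i}"

definition ft_cost :: "'a::metric_space set \<Rightarrow> 'a set \<Rightarrow> nat \<Rightarrow> real" where
  "ft_cost P C l = Max ((\<lambda>p. kdist C p l) ` P)"

definition r_opt :: "'a::metric_space set \<Rightarrow> nat \<Rightarrow> nat \<Rightarrow> real" where
  "r_opt P k l = Min {ft_cost P C' l | C'. C' \<subseteq> P \<and> card C' = k}"

end

theory Submission
  imports Defs
begin

lemma kdist_le:
  assumes "0 \<le> r" "i \<le> card (S \<inter> cball p r)"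
  shows "kdist S p i \<le> r"
  unfolding kdist_def
  by (rule cInf_lower) (use assms in \<open>auto intro: bdd_belowI[of _ 0]\<close>)

lemma kdist_mem:
  fixes S :: "'a::metric_space set"
  assumes fin: "finite S" and iS: "i \<le> card S"
  shows "0 \<le> kdist S p i \<and> i \<le> card (S \<inter> cball p (kdist S p i))"
proof -
  define K where "K = {r::real. 0 \<le> r \<and> i \<le> card (S \<inter> cball p r)}"
  define D where "D = insert 0 (dist p ` S)"
  have finD: "finite D" using fin by (simp add: D_def)
  define r0 where "r0 = Max D"
  have r0D: "r0 \<in> D" unfolding r0_def using finD by (intro Max_in) (auto simp: D_def)
  have "S \<subseteq> cball p r0" using finD by (auto simp: r0_def D_def)
  then have "S \<inter> cball p r0 = S" by blast
  moreover have "0 \<le> r0" using finD by (auto simp: r0_def D_def)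
  ultimately have r0K: "r0 \<in> K \<inter> D" using iS r0D by (simp add: K_def)
  define mu where "mu = Min (K \<inter> D)"
  have muin: "mu \<in> K \<inter> D" unfolding mu_def using r0K finD by (intro Min_in) auto
  have "Inf K = mu"
  proof (rule cInf_eq_minimum)
    show "mu \<in> K" using muin by simp
  next
    fix r assume rK: "r \<in> K"
    define r' where "r' = Max {d\<in>D. d \<le> r}"
    have fin2: "finite {d\<in>D. d \<le> r}" using finD by simp
    have ne2: "0 \<in> {d\<in>D. d \<le> r}" using rK by (simp add: D_def K_def)
    have r'in: "r' \<in> {d\<in>D. d \<le> r}" unfolding r'_def using fin2 ne2 by (intro Max_in) auto
    have "S \<inter> cball p r' = S \<inter> cball p r"
    proof
      show "S \<inter> cball p r' \<subseteq> S \<inter> cball p r" using r'in by auto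
      show "S \<inter> cball p r \<subseteq> S \<inter> cball p r'"
      proof
        fix s assume s: "s \<in> S \<inter> cball p r"
        then have "dist p s \<in> {d\<in>D. d \<le> r}" by (auto simp: D_def)
        then have "dist p s \<le> r'" unfolding r'_def using fin2 by (intro Max_ge)
        then show "s \<in> S \<inter> cball p r'" using s by auto
      qed
    qed
    then have "r' \<in> K \<inter> D" using rK r'in ne2 fin2 by (auto simp: K_def r'_def)
    then have "mu \<le> r'" unfolding mu_def using finD by (intro Min_le) auto
    then show "mu \<le> r" using r'in by simp
  qed
  then show ?thesis using muin by (simp add: kdist_def K_def)
qed

lemma rank_card:
  fixes S :: "'a set" and g :: "'a \<Rightarrow> real" and ix :: "'a \<Rightarrow> nat"
  assumes fin: "finite S" and inj: "inj_on ix S" and iS: "i \<le> card S"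
  shows "i \<le> card {s\<in>S. card {t\<in>S. g t < g s \<or> (g t = g s \<and> ix t < ix s)} < i}"
proof -
  define lt where "lt t s \<longleftrightarrow> g t < g s \<or> (g t = g s \<and> ix t < ix s)" for t s
  define rk where "rk s = card {t\<in>S. lt t s}" for s
  have mono: "rk s < rk s'" if "s \<in> S" "s' \<in> S" "lt s s'" for s s'
  proof -
    have "{t\<in>S. lt t s} \<subset> {t\<in>S. lt t s'}"
      using that by (auto simp: lt_def)
    then show ?thesis unfolding rk_def using fin by (intro psubset_card_mono) auto
  qed
  have injrk: "inj_on rk S"
  proof (rule inj_onI, rule ccontr)
    fix s s' assume "s \<in> S" "s' \<in> S" "rk s = rk s'" "s \<noteq> s'"
    then have "ix s \<noteq> ix s'" using inj by (auto dest: inj_onD)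
    then have "lt s s' \<or> lt s' s" by (auto simp: lt_def)
    then show False using mono \<open>s \<in> S\<close> \<open>s' \<in> S\<close> \<open>rk s = rk s'\<close> by fastforce
  qed
  have sub: "rk ` S \<subseteq> {0..<card S}"
  proof
    fix x assume "x \<in> rk ` S"
    then obtain s where s: "s \<in> S" "x = rk s" by auto
    have "{t\<in>S. lt t s} \<subset> S" using s by (auto simp: lt_def)
    then have "rk s < card S" unfolding rk_def using fin by (intro psubset_card_mono) auto
    then show "x \<in> {0..<card S}" using s by simp
  qed
  have eq: "rk ` S = {0..<card S}"
    using sub by (intro card_subset_eq) (auto simp: card_image[OF injrk])
  have "{0..<i} \<subseteq> rk ` {s\<in>S. rk s < i}"
  proof
    fix x assume "x \<in> {0..<i}"
    then have "x \<in> rk ` S" using eq iS by auto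
    then show "x \<in> rk ` {s\<in>S. rk s < i}" using \<open>x \<in> {0..<i}\<close> by auto
  qed
  then have "card {0..<i} \<le> card (rk ` {s\<in>S. rk s < i})"
    by (rule card_mono[rotated]) (use fin in simp)
  then have "i \<le> card (rk ` {s\<in>S. rk s < i})" by simp
  also have "\<dots> \<le> card {s\<in>S. rk s < i}" using fin by (intro card_image_le) simp
  finally show ?thesis by (simp add: rk_def lt_def)
qed


theorem theorem3:
  fixes pt :: "nat \<Rightarrow> 'a::metric_space" and P C :: "'a set"
    and n k l :: nat and q :: "nat \<Rightarrow> 'a"
  assumes "inj_on pt {1..n}" and "P = pt ` {1..n}"
    and "1 \<le> l" and "l \<le> k" and "k \<le> n"
    and "gonzalez P (k div l) q"
    and "C \<subseteq> P" and "card C = k"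
    and "(\<Union>i\<in>{1..k div l}. nn_set (inv_into {1..n} pt) P (q i) l) \<subseteq> C"
  shows "ft_cost P C l \<le> 4 * r_opt P k l \<and>
         (l dvd k \<longrightarrow> ft_cost P C l \<le> 3 * r_opt P k l)"
proof -
  note A = assms
  define m where "m = k div l"
  define ix where "ix = inv_into {1..n} pt"
  have finP: "finite P" using A(2) by simp
  have cardP: "card P = n" using A(1,2) by (simp add: card_image)
  have injix: "inj_on ix P" unfolding ix_def using A(2) by (intro inj_on_inv_into) simp
  have m1: "1 \<le> m"
  proof -
    have "l div l \<le> k div l" by (rule div_le_mono[OF A(4)])
    then show ?thesis using A(3) by (simp add: m_def)
  qed
  have km: "k < (m+1) * l" using A(3) unfolding m_def
    by (metis One_nat_def add.commute div_mult_mod_eq le_simps(3) mod_less_divisor mult_Suc not_less_eq_eq plus_1_eq_Suc add_le_cancel_left zero_less_iff_neq_zero)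
  define F where "F = {ft_cost P C' l | C'. C' \<subseteq> P \<and> card C' = k}"
  have finF: "finite F"
  proof -
    have "F \<subseteq> (\<lambda>C'. ft_cost P C' l) ` Pow P" unfolding F_def by auto
    then show ?thesis using finP by (meson finite_Pow_iff finite_imageI finite_subset)
  qed
  obtain C0 where "C0 \<subseteq> P" "card C0 = k" using A(5) cardP by (meson obtain_subset_with_card_n)
  then have "F \<noteq> {}" unfolding F_def by auto
  then have "r_opt P k l \<in> F" unfolding r_opt_def F_def[symmetric] using finF by (intro Min_in)
  then obtain Cs where Cs: "Cs \<subseteq> P" "card Cs = k" and rdef: "r_opt P k l = ft_cost P Cs l"
    unfolding F_def by auto
  define r where "r = r_opt P k l"
  have finCs: "finite Cs" using Cs finP finite_subset by blast
  have lCs: "l \<le> card Cs" using Cs A(4) by simp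
  have ball: "l \<le> card (Cs \<inter> cball x r)" if "x \<in> P" for x
  proof -
    have km: "0 \<le> kdist Cs x l \<and> l \<le> card (Cs \<inter> cball x (kdist Cs x l))"
      by (rule kdist_mem[OF finCs lCs])
    have "kdist Cs x l \<le> r" unfolding r_def rdef ft_cost_def using finP that by (intro Max_ge) auto
    then have "Cs \<inter> cball x (kdist Cs x l) \<subseteq> Cs \<inter> cball x r" by auto
    then have "card (Cs \<inter> cball x (kdist Cs x l)) \<le> card (Cs \<inter> cball x r)"
      using finCs by (intro card_mono) auto
    then show ?thesis using km by simp
  qed
  have r0: "0 \<le> r"
  proof -
    obtain x where "x \<in> P" using A(5) A(4) A(3) cardP by fastforce
    have "0 \<le> kdist Cs x l" using kdist_mem[OF finCs lCs] by blast
    also have "kdist Cs x l \<le> r" unfolding r_def rdef ft_cost_def using finP \<open>x \<in> P\<close> by (intro Max_ge) auto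
    finally show ?thesis .
  qed
  have qP: "q i \<in> P" if "i \<in> {1..m}" for i using A(6) that unfolding gonzalez_def m_def by blast
  have cover: "\<exists>i\<in>{1..m}. dist p (q i) \<le> 2 * r" if pP: "p \<in> P" for p
  proof (rule ccontr)
    assume "\<not> ?thesis"
    then have far: "\<And>i. i \<in> {1..m} \<Longrightarrow> 2 * r < dist p (q i)" by force
    define x where "x i = (if i = 0 then p else q i)" for i
    have xP: "x i \<in> P" if "i \<in> {0..m}" for i using that pP qP by (auto simp: x_def)
    have sep: "2 * r < dist (x i) (x j)" if "i \<in> {0..m}" "j \<in> {0..m}" "i < j" for i j
    proof (cases "i = 0")
      case True
      then show ?thesis using far[of j] that by (simp add: x_def)
    next
      case False
      have j2: "j \<in> {2..m}" using that False by auto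
      let ?S = "q ` {1..<j}"
      have finS: "finite ?S" and neS: "?S \<noteq> {}" using j2 by auto
      have "2 * r < dist_set p ?S"
        unfolding dist_set_def using finS neS far j2 by (subst Min_gr_iff) auto
      also have "\<dots> \<le> dist_set (q j) ?S" using A(6) j2 pP unfolding gonzalez_def m_def by blast
      also have "\<dots> \<le> dist (q j) (q i)" unfolding dist_set_def using finS that False by (intro Min_le) auto
      finally show ?thesis using False that by (simp add: x_def dist_commute)
    qed
    define B where "B i = Cs \<inter> cball (x i) r" for i
    have disj: "B i \<inter> B j = {}" if "i \<in> {0..m}" "j \<in> {0..m}" "i \<noteq> j" for i j
    proof -
      have "2 * r < dist (x i) (x j)"
        using that sep[of i j] sep[of j i] by (cases "i < j") (auto simp: dist_commute)
      then show ?thesis unfolding B_def using dist_triangle[of "x i" "x j"]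
        by (auto simp: dist_commute) (smt (verit) dist_triangle2 mem_cball)
    qed
    have "(m+1) * l = (\<Sum>i\<in>{0..m}. l)" by simp
    also have "\<dots> \<le> (\<Sum>i\<in>{0..m}. card (B i))"
      using ball xP unfolding B_def by (intro sum_mono) auto
    also have "\<dots> = card (\<Union>i\<in>{0..m}. B i)"
      using disj finCs by (intro card_UN_disjoint[symmetric]) (auto simp: B_def)
    also have "\<dots> \<le> card Cs" using finCs by (intro card_mono) (auto simp: B_def)
    finally show False using km Cs(2) by simp
  qed
  have nn_sub: "nn_set ix P (q i) l \<subseteq> cball (q i) r" if "i \<in> {1..m}" for i
  proof
    fix s assume s: "s \<in> nn_set ix P (q i) l"
    show "s \<in> cball (q i) r"
    proof (rule ccontr)
      assume "s \<notin> cball (q i) r"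
      then have "r < dist (q i) s" by simp
      then have "Cs \<inter> cball (q i) r \<subseteq> {t \<in> P. dist (q i) t < dist (q i) s \<or> (dist (q i) t = dist (q i) s \<and> ix t < ix s)}"
        using Cs(1) by auto
      then have "card (Cs \<inter> cball (q i) r) \<le> card {t \<in> P. dist (q i) t < dist (q i) s \<or> (dist (q i) t = dist (q i) s \<and> ix t < ix s)}"
        using finP by (intro card_mono) auto
      then show False using ball[OF qP[OF that]] s unfolding nn_set_def by simp
    qed
  qed
  have nn_card: "l \<le> card (nn_set ix P (q i) l)" for i
    unfolding nn_set_def using rank_card[OF finP injix, of l "\<lambda>t. dist (q i) t"] A(4,5) cardP by simp
  have each: "kdist C p l \<le> 3 * r" if pP: "p \<in> P" for p
  proof -
    obtain i where i: "i \<in> {1..m}" "dist p (q i) \<le> 2 * r" using cover[OF pP] by blast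
    have "nn_set ix P (q i) l \<subseteq> C \<inter> cball p (3 * r)"
    proof
      fix s assume s: "s \<in> nn_set ix P (q i) l"
      then have "s \<in> C" using A(9) i(1) unfolding ix_def m_def by blast
      moreover have "dist (q i) s \<le> r" using nn_sub[OF i(1)] s by auto
      then have "dist p s \<le> 3 * r" using i(2) dist_triangle[of p s "q i"] by simp
      ultimately show "s \<in> C \<inter> cball p (3 * r)" by simp
    qed
    then have "card (nn_set ix P (q i) l) \<le> card (C \<inter> cball p (3 * r))"
      using finP A(7) by (intro card_mono) (auto intro: finite_subset)
    then show ?thesis using nn_card[of i] r0 by (intro kdist_le) auto
  qed
  have "ft_cost P C l \<le> 3 * r"
    unfolding ft_cost_def using finP each A(5) A(3) A(4) cardP by (subst Max_le_iff) auto
  then show ?thesis using r0 unfolding r_def by simp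
qed

end
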